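(* For all $\ell,n\ge1$ there is a bijection $\Psi:G_{\ell,n}\to G_{\ell,n}$ such that for every $\sigma\in G_{\ell,n}$, $\mathrm{Der}(\Psi(\sigma))=\mathrm{Der}(\sigma)$ and $$(\mathrm{maf},\mathrm{exc},\mathrm{fix},\mathrm{col})\,\Psi(\sigma)=(\mathrm{maj},\mathrm{exc},\mathrm{fix},\mathrm{col})\,\sigma .$$
   Context: Let $\zeta=e^{2\pi i/\ell}$, $\Sigma_{\ell,n}=\{\zeta^jk:0\le j\le\ell-1,\ 1\le k\le n\}$, and $G_{\ell,n}$ the set of permutations $\sigma$ of $\Sigma_{\ell,n}$ with $\sigma(\zeta^jk)=\zeta^j\sigma(k)$, written as $x_1\cdots x_n$ with $x_i=\sigma(i)$. For $x=\zeta^jk$, $\varepsilon_x=\zeta^j$, $|x|=k$. Order $1>\zeta>\cdots>\zeta^{\ell-1}$ and $\Sigma_{\ell,n}$ by: $x<y$ iff $\varepsilon_x<\varepsilon_y$, or $\varepsilon_x=\varepsilon_y$ and $|x|<|y|$ ($i\in[n]$ identified with $\zeta^0i$). $\mathrm{maj}\,w=\sum_i i\,\chi(w_i>w_{i+1})$ for a word $w$. $\mathrm{FIX}(\sigma)=\{i:x_i=i\}$, $\mathrm{fix}=|\mathrm{FIX}|$; $\mathrm{exc}\,\sigma=\#\{i:x_i>i\}$; $\mathrm{col}\,\sigma=\sum_i j_i$ with $x_i=\zeta^{j_i}|x_i|$, $0\le j_i<\ell$. $\mathrm{Der}(\sigma)$: delete fixed points giving $y_1\cdots y_m$, then $\mathrm{Der}(\sigma)=z_1\cdots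 z_m$, $z_i=\varepsilon_{y_i}\mathrm{rank}(|y_i|)$, rank the increasing bijection $\{|y_1|,\dots,|y_m|\}\to[m]$. If $\mathrm{FIX}(\sigma)=\{i_1<\dots<i_k\}$, $\mathrm{maf}\,\sigma=\mathrm{maj}\,\mathrm{Der}(\sigma)+\sum_{j=1}^k(i_j-j)$. *)

theory Defs
  imports Main
begin

text \<open>An element zeta^j * k of Sigma_{l,n} is encoded as the pair (j, k) with 0 <= j < l, 1 <= k <= n.
  A colored permutation sigma in G_{l,n} is encoded by its word x_1 ... x_n as a list of pairs
  (position i is list index i - 1).\<close>

definition G :: "nat \<Rightarrow> nat \<Rightarrow> (nat \<times> nat) list set" where
  "G l n = {w. length w = n \<and> distinct (map snd w) \<and> set (map snd w) = {1..n}
              \<and> (\<forall>x\<in>set w. fst x < l)}"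

text \<open>Order: 1 > zeta > ... > zeta^(l-1); x < y iff eps_x < eps_y, or equal colors and |x| < |y|.\<close>
definition cless :: "nat \<times> nat \<Rightarrow> nat \<times> nat \<Rightarrow> bool" where
  "cless x y \<longleftrightarrow> fst y < fst x \<or> (fst x = fst y \<and> snd x < snd y)"

definition maj :: "(nat \<times> nat) list \<Rightarrow> nat" where
  "maj w = (\<Sum>i\<in>{1..<length w}. if cless (w ! i) (w ! (i - 1)) then i else 0)"

definition FIX :: "(nat \<times> nat) list \<Rightarrow> nat set" where
  "FIX s = {i\<in>{1..length s}. s ! (i - 1) = (0, i)}"

definition fixn :: "(nat \<times> nat) list \<Rightarrow> nat" where
  "fixn s = card (FIX s)"

definition exc :: "(nat \<times> nat) list \<Rightarrow> nat" where
  "exc s = card {i\<in>{1..length s}. cless (0, i) (s ! (i - 1))}"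

definition col :: "(nat \<times> nat) list \<Rightarrow> nat" where
  "col s = sum_list (map fst s)"

definition Der :: "(nat \<times> nat) list \<Rightarrow> (nat \<times> nat) list" where
  "Der s = (let ys = map snd (filter (\<lambda>(i, x). x \<noteq> (0, i)) (zip [1..<length s + 1] s));
                S = snd ` set ys;
                rank = (\<lambda>k. card {a\<in>S. a \<le> k})
            in map (\<lambda>(c, k). (c, rank k)) ys)"

definition maf :: "(nat \<times> nat) list \<Rightarrow> nat" where
  "maf s = maj (Der s) +
     (let L = sorted_list_of_set (FIX s) in \<Sum>j<length L. L ! j - (j + 1))"

end

theory Submission
  imports Defs "HOL-Library.Multiset"
begin


definition shm :: "nat \<Rightarrow> nat multiset \<Rightarrow> nat multiset" where
  "shm c M = image_mset ((+) c) M"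

lemma shm_add[simp]: "shm c (M + N) = shm c M + shm c N"
  by (simp add: shm_def)
lemma shm_shm[simp]: "shm a (shm b M) = shm (a+b) M"
  by (induction M) (simp_all add: shm_def)
lemma shm_0[simp]: "shm 0 M = M"
  by (induction M) (simp_all add: shm_def)
lemma shm_empty[simp]: "shm c {#} = {#}"
  by (simp add: shm_def)
lemma shm_add_mset[simp]: "shm c (add_mset x M) = add_mset (c+x) (shm c M)"
  by (simp add: shm_def)
lemma shm_single[simp]: "shm c {#x#} = {#c+x#}"
  by (simp add: shm_def)

fun Qg :: "nat \<Rightarrow> nat \<Rightarrow> nat multiset" where
  "Qg 0 k = (if k = 0 then {#0#} else {#})"
| "Qg (Suc g) 0 = {#0#}"
| "Qg (Suc g) (Suc k) = Qg g (Suc k) + shm g (Qg (Suc g) k)"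

lemma Qg1: "Qg (Suc 0) k = {#0#}"
  by (induction k) auto

lemma P2: "Qg (Suc g) (Suc k) = Qg (Suc g) k + shm (Suc k) (Qg g (Suc k))"
proof (induction g arbitrary: k)
  case 0
  then show ?case by (simp add: Qg1)
next
  case (Suc g)
  note outer = Suc.IH
  show ?case
  proof (induction k)
    case 0
    have "Qg (Suc (Suc g)) (Suc 0) = Qg (Suc g) (Suc 0) + {#Suc g#}"
      by (simp only: Qg.simps shm_single) simp
    also have "\<dots> = {#0#} + shm 1 (Qg g 1) + {#Suc g#}" using outer[of 0] by simp
    also have "\<dots> = {#0#} + shm 1 (Qg g 1 + {#g#})" by simp
    also have "Qg g 1 + {#g#} = Qg (Suc g) 1" by (simp only: Qg.simps One_nat_def shm_single) simp
    finally show ?case by (simp del: Qg.simps add: Qg.simps(2))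
  next
    case (Suc k)
    have A: "Qg (Suc g) (Suc (Suc k)) = Qg (Suc g) (Suc k) + shm (Suc (Suc k)) (Qg g (Suc (Suc k)))"
      using outer by blast
    show ?case
      apply (subst Qg.simps(3))
      apply (subst A)
      apply (subst Suc.IH)
      apply (subst (2) Qg.simps(3))
      apply (subst (2) Qg.simps(3))
      apply (simp add: add_ac)
      done
  qed
qed

lemma Qg_0[simp]: "Qg m 0 = {#0#}"
  by (cases m) auto

definition cT :: "bool list \<Rightarrow> nat" where "cT b = length (filter (\<lambda>x. x) b)"
definition cF :: "bool list \<Rightarrow> nat" where "cF b = length (filter (\<lambda>x. \<not> x) b)"

lemma cTF_len: "cT b + cF b = length b"
  unfolding cT_def cF_def using sum_length_filter_compl[of "\<lambda>x. x" b] by simp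

lemma cT_app[simp]: "cT (b @ [x]) = cT b + (if x then 1 else 0)" by (simp add: cT_def)
lemma cF_app[simp]: "cF (b @ [x]) = cF b + (if x then 0 else 1)" by (simp add: cF_def)
lemma cT_Nil[simp]: "cT [] = 0" by (simp add: cT_def)
lemma cF_Nil[simp]: "cF [] = 0" by (simp add: cF_def)

definition S :: "nat \<Rightarrow> nat \<Rightarrow> bool list set" where
  "S m k = {b. cT b = k \<and> cF b = m}"

lemma finite_S: "finite (S m k)"
proof -
  have "S m k \<subseteq> {xs. set xs \<subseteq> UNIV \<and> length xs = k + m}"
    using cTF_len by (auto simp: S_def)
  moreover have "finite {xs. set xs \<subseteq> (UNIV::bool set) \<and> length xs = k + m}"
    by (rule finite_lists_length_eq) simp
  ultimately show ?thesis by (rule finite_subset)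
qed

definition A0 :: "nat \<Rightarrow> nat \<Rightarrow> bool list set" where
  "A0 m k = {b \<in> S m k. b = [] \<or> \<not> last b}"
definition Ap :: "nat \<Rightarrow> nat \<Rightarrow> bool list set" where
  "Ap m k = {b \<in> S m k. b \<noteq> [] \<and> last b}"

lemma S_split: "S m k = Ap m k \<union> A0 m k" "Ap m k \<inter> A0 m k = {}"
  by (auto simp: A0_def Ap_def)

lemma finite_A: "finite (A0 m k)" "finite (Ap m k)"
  using finite_S by (auto simp: A0_def Ap_def)

lemma butlast_split: "b \<noteq> [] \<Longrightarrow> b = butlast b @ [last b]" by simp

lemma Ap_Suc: "Ap m (Suc k) = (\<lambda>b. b @ [True]) ` S m k"
proof safe
  fix b assume "b \<in> Ap m (Suc k)"
  then have b: "b \<noteq> []" "last b" "cT b = Suc k" "cF b = m" by (auto simp: Ap_def S_def)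
  obtain c where e: "b = c @ [True]" using b butlast_split by metis
  have "c \<in> S m k" using b unfolding e by (simp add: S_def)
  then show "b \<in> (\<lambda>b. b @ [True]) ` S m k" using e by blast
next
  fix b assume "b \<in> S m k" then show "b @ [True] \<in> Ap m (Suc k)" by (simp add: Ap_def S_def)
qed

lemma Ap_0: "Ap m 0 = {}"
proof -
  have False if "b \<in> Ap m 0" for b
  proof -
    have h: "b \<noteq> []" "last b" "cT b = 0" using that by (auto simp: Ap_def S_def)
    have "last b \<in> set b" using h(1) by (rule last_in_set)
    then have "filter (\<lambda>x. x) b \<noteq> []" using h(2) by (auto simp: filter_empty_conv)
    then show False using h(3) by (simp add: cT_def)
  qed
  then show ?thesis by auto
qed

lemma A0_Suc: "A0 (Suc m) k = (\<lambda>b. b @ [False]) ` S m k"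
proof safe
  fix b assume "b \<in> A0 (Suc m) k"
  then have b0: "b = [] \<or> \<not> last b" "cT b = k" "cF b = Suc m" by (auto simp: A0_def S_def)
  then have bne: "b \<noteq> []" by auto
  then have b: "\<not> last b" using b0 by auto
  obtain c where e: "b = c @ [False]" using b bne butlast_split by metis
  have "c \<in> S m k" using b0 unfolding e by (simp add: S_def)
  then show "b \<in> (\<lambda>b. b @ [False]) ` S m k" using e by blast
next
  fix b assume "b \<in> S m k" then show "b @ [False] \<in> A0 (Suc m) k" by (simp add: A0_def S_def)
qed

lemma A0_0: "A0 0 k = (if k = 0 then {[]} else {})"
proof -
  have "b \<in> A0 0 k \<longleftrightarrow> b = [] \<and> k = 0" for b
  proof
    assume "b \<in> A0 0 k"
    then have h: "b = [] \<or> \<not> last b" "cT b = k" "cF b = 0" by (auto simp: A0_def S_def)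
    have "b = []"
    proof (rule ccontr)
      assume "b \<noteq> []"
      then have "last b \<in> set b" by (rule last_in_set)
      moreover have "\<not> last b" using h \<open>b \<noteq> []\<close> by auto
      ultimately have "filter (\<lambda>x. \<not> x) b \<noteq> []" by (auto simp: filter_empty_conv)
      then show False using h(3) by (simp add: cF_def)
    qed
    then show "b = [] \<and> k = 0" using h by simp
  qed (auto simp: A0_def S_def)
  then show ?thesis by auto
qed

lemma img_union: "finite B \<Longrightarrow> finite C \<Longrightarrow> B \<inter> C = {} \<Longrightarrow>
   image_mset f (mset_set (B \<union> C)) = image_mset f (mset_set B) + image_mset f (mset_set C)"
  by (simp add: mset_set_Union)

lemma img_app: "image_mset f (mset_set ((\<lambda>b. b @ [x]) ` A)) = image_mset (\<lambda>b. f (b @ [x])) (mset_set A)"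
proof -
  have "inj_on (\<lambda>b. b @ [x]) A" by (auto simp: inj_on_def)
  then show ?thesis by (simp add: image_mset_mset_set[symmetric] multiset.map_comp comp_def)
qed

lemma img_cong_shift: "finite A \<Longrightarrow> (\<And>b. b \<in> A \<Longrightarrow> f b = c + g b) \<Longrightarrow>
   image_mset f (mset_set A) = shm c (image_mset g (mset_set A))"
proof -
  assume a: "finite A" "\<And>b. b \<in> A \<Longrightarrow> f b = c + g b"
  have "image_mset f (mset_set A) = image_mset (\<lambda>x. c + g x) (mset_set A)"
    by (rule image_mset_cong) (simp add: a)
  then show ?thesis by (simp add: shm_def multiset.map_comp comp_def)
qed

lemma img_S: "image_mset f (mset_set (S m k)) = image_mset f (mset_set (Ap m k)) + image_mset f (mset_set (A0 m k))"
  using img_union[OF finite_A(2) finite_A(1) S_split(2)] S_split(1) by simp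

definition ltr :: "bool list \<Rightarrow> nat \<Rightarrow> nat" where
  "ltr b j = cF (take (Suc j) b)"

definition dsc :: "(nat \<Rightarrow> bool) \<Rightarrow> (nat \<Rightarrow> bool) \<Rightarrow> bool list \<Rightarrow> nat \<Rightarrow> bool" where
  "dsc e D b i = (if b ! (i - 1) then (if b ! i then False else \<not> e (ltr b i))
                  else (if b ! i then e (ltr b (i - 1)) else D (ltr b (i - 1))))"

definition Mt :: "(nat \<Rightarrow> bool) \<Rightarrow> (nat \<Rightarrow> bool) \<Rightarrow> bool list \<Rightarrow> nat" where
  "Mt e D b = (\<Sum>i\<in>{1..<length b}. if dsc e D b i then i else 0)"

definition majD :: "(nat \<Rightarrow> bool) \<Rightarrow> nat \<Rightarrow> nat" where
  "majD D m = (\<Sum>t\<in>{1..<m}. if D t then t else 0)"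

lemma majD_Suc: "majD D (Suc m) = majD D m + (if D m then m else 0)"
  by (cases m) (auto simp: majD_def)
lemma majD_01[simp]: "majD D 0 = 0" "majD D (Suc 0) = 0" by (auto simp: majD_def)

lemma ltr_app: "j < length b \<Longrightarrow> ltr (b @ [x]) j = ltr b j"
  by (simp add: ltr_def)

lemma dsc_app: "1 \<le> i \<Longrightarrow> i < length b \<Longrightarrow> dsc e D (b @ [x]) i = dsc e D b i"
proof -
  assume a: "1 \<le> i" "i < length b"
  then have "i - 1 < length b" "i - 1 < length b" by auto
  then show ?thesis using a by (simp add: dsc_def nth_append ltr_app)
qed

lemma Mt_single[simp]: "Mt e D [x] = 0" "Mt e D [] = 0" by (simp_all add: Mt_def)

lemma Mt_app: "Mt e D (b @ [x]) = Mt e D b + (if b = [] then 0 else if dsc e D (b @ [x]) (length b) then length b else 0)"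
proof (cases "b = []")
  case True then show ?thesis by (simp add: Mt_def)
next
  case False
  then have "{1..<length (b @ [x])} = insert (length b) {1..<length b}" by (cases b) auto
  then have "Mt e D (b @ [x]) = (if dsc e D (b @ [x]) (length b) then length b else 0) +
      (\<Sum>i\<in>{1..<length b}. if dsc e D (b @ [x]) i then i else 0)"
    by (simp add: Mt_def)
  also have "(\<Sum>i\<in>{1..<length b}. if dsc e D (b @ [x]) i then i else 0) = Mt e D b"
    unfolding Mt_def by (rule sum.cong) (auto simp: dsc_app)
  finally show ?thesis using False by simp
qed

lemma dsc_last: "b \<noteq> [] \<Longrightarrow> dsc e D (b @ [x]) (length b) =
   (if last b then (if x then False else \<not> e (Suc (cF b))) else (if x then e (cF b) else D (cF b)))"
proof -
  assume b: "b \<noteq> []"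
  have 1: "(b @ [x]) ! (length b - 1) = last b" using b by (simp add: nth_append last_conv_nth)
  have 2: "ltr (b @ [x]) (length b) = cF b + (if x then 0 else 1)" by (simp add: ltr_def)
  have 3: "ltr (b @ [x]) (length b - 1) = cF b" using b by (simp add: ltr_def)
  show ?thesis unfolding dsc_def 1 2 3 by simp
qed

lemma Mt_T: "b \<in> S m k \<Longrightarrow> Mt e D (b @ [True]) = Mt e D b + (if b \<noteq> [] \<and> \<not> last b \<and> e m then m + k else 0)"
  using cTF_len[of b] by (auto simp: Mt_app dsc_last S_def)

lemma Mt_F: "b \<in> S m k \<Longrightarrow> Mt e D (b @ [False]) = Mt e D b + (if b = [] then 0 else if last b then (if e (Suc m) then 0 else m + k) else (if D m then m + k else 0))"
  using cTF_len[of b] by (auto simp: Mt_app dsc_last S_def)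

definition Phi0 where "Phi0 e D m k = image_mset (Mt e D) (mset_set (A0 m k))"
definition Phip where "Phip e D m k = image_mset (Mt e D) (mset_set (Ap m k))"

lemma Phip_rec: "Phip e D m (Suc k) = Phip e D m k + shm (if e m then m + k else 0) (Phi0 e D m k)"
proof -
  have "Phip e D m (Suc k) = image_mset (\<lambda>b. Mt e D (b @ [True])) (mset_set (S m k))"
    unfolding Phip_def Ap_Suc img_app ..
  also have "\<dots> = image_mset (\<lambda>b. Mt e D (b @ [True])) (mset_set (Ap m k)) +
                   image_mset (\<lambda>b. Mt e D (b @ [True])) (mset_set (A0 m k))"
    by (rule img_S)
  also have "image_mset (\<lambda>b. Mt e D (b @ [True])) (mset_set (Ap m k)) = shm 0 (Phip e D m k)"
    unfolding Phip_def by (rule img_cong_shift[OF finite_A(2)]) (auto simp: Ap_def Mt_T)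
  also have "image_mset (\<lambda>b. Mt e D (b @ [True])) (mset_set (A0 m k)) = shm (if e m then m + k else 0) (Phi0 e D m k)"
    unfolding Phi0_def
  proof (rule img_cong_shift[OF finite_A(1)])
    fix b assume b: "b \<in> A0 m k"
    then have "b = [] \<Longrightarrow> m + k = 0" by (auto simp: A0_def S_def)
    then show "Mt e D (b @ [True]) = (if e m then m + k else 0) + Mt e D b"
      using b by (auto simp: A0_def Mt_T)
  qed
  finally show ?thesis by simp
qed

lemma Phi0_rec: "Phi0 e D (Suc m) k = shm (if e (Suc m) then 0 else m + k) (Phip e D m k) + shm (if D m then m + k else 0) (Phi0 e D m k)"
proof -
  have "Phi0 e D (Suc m) k = image_mset (\<lambda>b. Mt e D (b @ [False])) (mset_set (S m k))"
    unfolding Phi0_def A0_Suc img_app ..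
  also have "\<dots> = image_mset (\<lambda>b. Mt e D (b @ [False])) (mset_set (Ap m k)) +
                   image_mset (\<lambda>b. Mt e D (b @ [False])) (mset_set (A0 m k))"
    by (rule img_S)
  also have "image_mset (\<lambda>b. Mt e D (b @ [False])) (mset_set (Ap m k)) = shm (if e (Suc m) then 0 else m + k) (Phip e D m k)"
    unfolding Phip_def by (rule img_cong_shift[OF finite_A(2)]) (auto simp: Ap_def Mt_F)
  also have "image_mset (\<lambda>b. Mt e D (b @ [False])) (mset_set (A0 m k)) = shm (if D m then m + k else 0) (Phi0 e D m k)"
    unfolding Phi0_def
  proof (rule img_cong_shift[OF finite_A(1)])
    fix b assume b: "b \<in> A0 m k"
    then have "b = [] \<Longrightarrow> m + k = 0" by (auto simp: A0_def S_def)
    then show "Mt e D (b @ [False]) = (if D m then m + k else 0) + Mt e D b"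
      using b by (auto simp: A0_def Mt_F)
  qed
  finally show ?thesis by simp
qed


lemma P1': "Qg (Suc g) (Suc k) = Qg g (Suc k) + shm g (Qg (Suc g) k)" by simp

lemma B_from_A:
  assumes A: "\<And>k. Phi0 e D m k = shm (majD D m + (if e m then 0 else k)) (Qg m k)"
  shows "Phip e D m k = (if k = 0 then {#} else shm (majD D m + (if e m then m else 0)) (Qg (Suc m) (k - 1)))"
proof (induction k)
  case 0 show ?case by (simp add: Phip_def Ap_0)
next
  case (Suc k)
  show ?case
  proof (cases k)
    case 0 then show ?thesis using Suc.IH A[of 0] by (cases "e m") (simp_all add: Phip_rec add_ac)
  next
    case (Suc k')
    then show ?thesis using Suc.IH A[of k] 
      by (cases "e m") (simp_all del: Qg.simps add: Phip_rec P2 add_ac)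
  qed
qed

lemma A_all:
  assumes cons: "\<And>t. 1 \<le> t \<Longrightarrow> t < M \<Longrightarrow> (e t \<and> \<not> e (Suc t) \<longrightarrow> D t) \<and> (\<not> e t \<and> e (Suc t) \<longrightarrow> \<not> D t)"
  shows "m \<le> M \<Longrightarrow> Phi0 e D m k = shm (majD D m + (if e m then 0 else k)) (Qg m k)"
proof (induction m arbitrary: k)
  case 0
  show ?case by (simp add: Phi0_def A0_0)
next
  case (Suc m)
  have A: "\<And>k. Phi0 e D m k = shm (majD D m + (if e m then 0 else k)) (Qg m k)" using Suc by simp
  note B = B_from_A[OF A]
  show ?case
  proof (cases k)
    case 0 then show ?thesis using B[of 0] A[of 0] by (simp add: Phi0_rec majD_Suc add_ac)
  next
    case (Suc k')
    show ?thesis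
    proof (cases m)
      case 0 then show ?thesis using B[of k] A[of k] \<open>k = Suc k'\<close> by (cases "e 1") (simp_all add: Phi0_rec Qg1)
    next
      case (Suc m'')
      then have c: "(e m \<and> \<not> e (Suc m) \<longrightarrow> D m) \<and> (\<not> e m \<and> e (Suc m) \<longrightarrow> \<not> D m)"
        using cons[of m] \<open>Suc m \<le> M\<close> by simp
      have X: "Phi0 e D (Suc m) k = shm (if e (Suc m) then 0 else m + Suc k') (shm (majD D m + (if e m then m else 0)) (Qg (Suc m) k')) + shm (if D m then m + Suc k' else 0) (shm (majD D m + (if e m then 0 else Suc k')) (Qg m (Suc k')))"
        using B[of k] A[of k] \<open>k = Suc k'\<close> by (simp add: Phi0_rec)
      have T: "shm (if e (Suc m) then 0 else m + Suc k') (shm (majD D m + (if e m then m else 0)) (Qg (Suc m) k')) + shm (if D m then m + Suc k' else 0) (shm (majD D m + (if e m then 0 else Suc k')) (Qg m (Suc k')))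
         = shm (majD D (Suc m) + (if e (Suc m) then 0 else k)) (Qg (Suc m) k)"
        unfolding \<open>k = Suc k'\<close> majD_Suc
        using c
        by (cases "e m"; cases "e (Suc m)"; cases "D m"; ((simp del: Qg.simps add: P1' add_ac; fail) | (simp del: Qg.simps add: P2 add_ac; fail) | simp))
      show ?thesis by (rule trans[OF X T])
    qed
  qed
qed

lemma Mt_dist:
  assumes cons: "\<And>t. 1 \<le> t \<Longrightarrow> t < m \<Longrightarrow> (e t \<and> \<not> e (Suc t) \<longrightarrow> D t) \<and> (\<not> e t \<and> e (Suc t) \<longrightarrow> \<not> D t)"
  shows "image_mset (Mt e D) (mset_set (S m k)) = shm (majD D m) (Qg (Suc m) k)"
proof -
  have A: "Phi0 e D m k = shm (majD D m + (if e m then 0 else k)) (Qg m k)" by (rule A_all[where M=m and e=e and D=D, OF cons]) auto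
  have B: "Phip e D m k = (if k = 0 then {#} else shm (majD D m + (if e m then m else 0)) (Qg (Suc m) (k - 1)))"
    by (rule B_from_A) (rule A_all[where M=m and e=e and D=D, OF cons], auto)
  have "image_mset (Mt e D) (mset_set (S m k)) = Phip e D m k + Phi0 e D m k"
    unfolding Phip_def Phi0_def by (rule img_S)
  also have "\<dots> = shm (majD D m) (Qg (Suc m) k)"
  proof (cases k)
    case 0 then show ?thesis using A B by simp
  next
    case (Suc k')
    then show ?thesis using A B
      by (cases "e m") ((simp del: Qg.simps add: P1' add_ac), (simp del: Qg.simps add: P2 add_ac))
  qed
  finally show ?thesis .
qed


definition phi :: "bool list \<Rightarrow> nat" where
  "phi b = (\<Sum>i<length b. if b ! i then cF (take i b) else 0)"

lemma phi_app: "phi (b @ [x]) = phi b + (if x then cF b else 0)"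
proof -
  have "phi (b @ [x]) = (\<Sum>i<length b. if (b @ [x]) ! i then cF (take i (b @ [x])) else 0) + (if x then cF b else 0)"
    by (simp add: phi_def)
  also have "(\<Sum>i<length b. if (b @ [x]) ! i then cF (take i (b @ [x])) else 0) = phi b"
    unfolding phi_def by (rule sum.cong) (auto simp: nth_append)
  finally show ?thesis .
qed

lemma phi_Nil[simp]: "phi [] = 0" by (simp add: phi_def)

lemma phi_dist: "image_mset phi (mset_set (S m k)) = Qg (Suc m) k"
proof (induction k arbitrary: m)
  case 0
  show ?case
  proof (induction m)
    case 0 then show ?case by (simp add: img_S Ap_0 A0_0)
  next
    case (Suc m)
    have "image_mset phi (mset_set (A0 (Suc m) 0)) = image_mset phi (mset_set (S m 0))"
      unfolding A0_Suc img_app by (rule img_cong_shift[where c=0, simplified]) (auto simp: phi_app finite_S)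
    then show ?case using Suc by (simp add: img_S[of phi "Suc m"] Ap_0)
  qed
next
  case (Suc k)
  note outer = Suc.IH
  have Ap: "image_mset phi (mset_set (Ap m (Suc k))) = shm m (Qg (Suc m) k)" for m
  proof -
    have "image_mset phi (mset_set (Ap m (Suc k))) = shm m (image_mset phi (mset_set (S m k)))"
      unfolding Ap_Suc img_app by (rule img_cong_shift) (auto simp: phi_app finite_S[unfolded S_def] S_def)
    then show ?thesis using outer by simp
  qed
  show ?case
  proof (induction m)
    case 0 then show ?case using Ap[of 0] by (simp add: img_S A0_0 Qg1)
  next
    case (Suc m')
    have "image_mset phi (mset_set (A0 (Suc m') (Suc k))) = image_mset phi (mset_set (S m' (Suc k)))"
      unfolding A0_Suc img_app by (rule img_cong_shift[where c=0, simplified]) (auto simp: phi_app finite_S)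
    then show ?case using Ap[of "Suc m'"] Suc.IH by (simp add: img_S[of phi "Suc m'"] add_ac)
  qed
qed



definition nfp :: "(nat \<times> nat) list \<Rightarrow> nat \<Rightarrow> bool" where
  "nfp s i \<longleftrightarrow> s ! i \<noteq> (0, Suc i)"
definition NF :: "(nat \<times> nat) list \<Rightarrow> nat list" where
  "NF s = filter (nfp s) [0..<length s]"
definition fb :: "(nat \<times> nat) list \<Rightarrow> bool list" where
  "fb s = map (\<lambda>i. \<not> nfp s i) [0..<length s]"
definition VS :: "(nat \<times> nat) list \<Rightarrow> nat set" where
  "VS s = (\<lambda>i. snd (s ! i)) ` set (NF s)"
definition rk :: "(nat \<times> nat) list \<Rightarrow> nat \<Rightarrow> nat" where
  "rk s v = card {a \<in> VS s. a \<le> v}"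
definition pidx :: "(nat \<times> nat) list \<Rightarrow> nat \<Rightarrow> nat" where
  "pidx s j = length (filter (nfp s) [0..<j])"

lemma zip_upt_Suc: "zip [1..<length s + 1] s = map (\<lambda>i. (Suc i, s ! i)) [0..<length s]"
  by (rule nth_equalityI) (simp_all del: upt_Suc)

lemma Der_alt: "Der s = map (\<lambda>i. (fst (s ! i), rk s (snd (s ! i)))) (NF s)"
proof -
  have f: "filter (\<lambda>(i, x). x \<noteq> (0, i)) (zip [1..<length s + 1] s) = map (\<lambda>i. (Suc i, s ! i)) (NF s)"
    unfolding zip_upt_Suc NF_def filter_map by (simp add: comp_def nfp_def[abs_def])
  have "snd ` set (map snd (filter (\<lambda>(i, x). x \<noteq> (0, i)) (zip [1..<length s + 1] s))) = VS s"
    unfolding f VS_def by (auto simp: image_image)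
  then show ?thesis unfolding Der_def Let_def f rk_def by (simp add: comp_def case_prod_beta)
qed

lemma length_Der: "length (Der s) = length (NF s)" by (simp add: Der_alt)
lemma Der_nth: "t < length (NF s) \<Longrightarrow> Der s ! t = (fst (s ! (NF s ! t)), rk s (snd (s ! (NF s ! t))))"
  by (simp add: Der_alt)

lemma NF_sorted: "sorted_wrt (<) (NF s)"
  unfolding NF_def by (rule sorted_wrt_filter) simp
lemma NF_distinct: "distinct (NF s)"
  unfolding NF_def by simp
lemma set_NF: "set (NF s) = {i. i < length s \<and> nfp s i}"
  unfolding NF_def by auto

lemma upt_split3: "j < n \<Longrightarrow> [0..<n] = [0..<j] @ j # [Suc j..<n]"
proof -
  assume j: "j < n"
  have "[0..<j + (n - j)] = [0..<j] @ [j..<j + (n - j)]" by (rule upt_add_eq_append) simp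
  then have "[0..<n] = [0..<j] @ [j..<n]" using j by simp
  also have "[j..<n] = j # [Suc j..<n]" using j by (rule upt_conv_Cons)
  finally show ?thesis .
qed

lemma NF_pidx: "j < length s \<Longrightarrow> nfp s j \<Longrightarrow> pidx s j < length (NF s) \<and> NF s ! pidx s j = j"
proof -
  assume a: "j < length s" "nfp s j"
  have "NF s = filter (nfp s) [0..<j] @ j # filter (nfp s) [Suc j..<length s]"
    unfolding NF_def using upt_split3[OF a(1)] a(2) by simp
  then show ?thesis unfolding pidx_def by (simp add: nth_append)
qed

lemma pidx_NF: "t < length (NF s) \<Longrightarrow> pidx s (NF s ! t) = t"
proof -
  assume t: "t < length (NF s)"
  have m: "NF s ! t \<in> set (NF s)" using t by simp
  then have a: "NF s ! t < length s" "nfp s (NF s ! t)" by (auto simp: set_NF)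
  from NF_pidx[OF a] have "NF s ! pidx s (NF s ! t) = NF s ! t" "pidx s (NF s ! t) < length (NF s)" by auto
  then show ?thesis using t NF_distinct nth_eq_iff_index_eq by blast
qed

lemma sorted_le_card: 
  fixes xs :: "nat list"
  assumes "sorted_wrt (<) xs" "t < length xs"
  shows "card {x \<in> set xs. x \<le> xs ! t} = Suc t"
proof -
  have "{x \<in> set xs. x \<le> xs ! t} = (\<lambda>j. xs ! j) ` {..t}"
  proof (intro equalityI subsetI)
    fix x assume "x \<in> {x \<in> set xs. x \<le> xs ! t}"
    then have x: "x \<in> set xs" "x \<le> xs ! t" by auto
    then obtain j where j: "j < length xs" "x = xs ! j" by (auto simp: in_set_conv_nth)
    have "j \<le> t"
    proof (rule ccontr)
      assume "\<not> j \<le> t" then have "xs ! t < xs ! j" using assms j by (simp add: sorted_wrt_iff_nth_less)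
      then show False using j x by simp
    qed
    then show "x \<in> (\<lambda>j. xs ! j) ` {..t}" using j by auto
  next
    fix x assume "x \<in> (\<lambda>j. xs ! j) ` {..t}"
    then obtain j where j: "j \<le> t" "x = xs ! j" by auto
    have "xs ! j \<le> xs ! t" using assms j
      by (cases "j = t") (auto simp: sorted_wrt_iff_nth_less less_imp_le)
    then show "x \<in> {x \<in> set xs. x \<le> xs ! t}" using j assms by auto
  qed
  moreover have "inj_on (\<lambda>j. xs ! j) {..t}"
  proof (rule inj_onI)
    fix i j assume ij: "i \<in> {..t}" "j \<in> {..t}" "xs ! i = xs ! j"
    show "i = j"
    proof (rule ccontr)
      assume "i \<noteq> j"
      have lt: "\<And>a b. a < b \<Longrightarrow> b < length xs \<Longrightarrow> xs ! a < xs ! b"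
        using assms(1) by (simp add: sorted_wrt_iff_nth_less)
      have "i < length xs" "j < length xs" using ij assms by auto
      then have "i < j \<or> j < i" using \<open>i \<noteq> j\<close> by arith
      then show False using lt ij \<open>i < length xs\<close> \<open>j < length xs\<close> by (metis less_irrefl)
    qed
  qed
  ultimately show ?thesis by (simp add: card_image)
qed


lemma G_len: "s \<in> G l n \<Longrightarrow> length s = n" by (simp add: G_def)
lemma G_snd_inj: "s \<in> G l n \<Longrightarrow> i < n \<Longrightarrow> j < n \<Longrightarrow> snd (s ! i) = snd (s ! j) \<Longrightarrow> i = j"
  unfolding G_def by (auto simp: distinct_conv_nth)
lemma G_snd_range: "s \<in> G l n \<Longrightarrow> i < n \<Longrightarrow> snd (s ! i) \<in> {1..n}"
proof -
  assume a: "s \<in> G l n" "i < n"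
  then have "s ! i \<in> set s" by (simp add: G_def)
  then have "snd (s ! i) \<in> set (map snd s)" by simp
  then show ?thesis using a by (simp only: G_def mem_Collect_eq)
qed
lemma G_snd_surj: "s \<in> G l n \<Longrightarrow> v \<in> {1..n} \<Longrightarrow> \<exists>i<n. snd (s ! i) = v"
proof -
  assume a: "s \<in> G l n" "v \<in> {1..n}"
  then have "v \<in> set (map snd s)" by (simp only: G_def mem_Collect_eq)
  then obtain i where "i < length (map snd s)" "map snd s ! i = v" by (auto simp: in_set_conv_nth)
  then show ?thesis using a by (auto simp: G_def)
qed
lemma G_fst: "s \<in> G l n \<Longrightarrow> i < n \<Longrightarrow> fst (s ! i) < l"
  unfolding G_def by auto

lemma VS_eq: assumes s: "s \<in> G l n" shows "VS s = Suc ` set (NF s)"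
proof (intro equalityI subsetI)
  have len: "length s = n" using s by (rule G_len)
  fix v assume "v \<in> VS s"
  then obtain i where i: "i \<in> set (NF s)" "v = snd (s ! i)" by (auto simp: VS_def)
  then have i2: "i < n" "nfp s i" using len by (auto simp: set_NF)
  then have "v \<in> {1..n}" using G_snd_range[OF s] i by simp
  then have "v - 1 < n" "v = Suc (v - 1)" by auto
  then obtain j where j: "j < n" "v = Suc j" by blast
  have "nfp s j"
  proof (rule ccontr)
    assume "\<not> nfp s j" then have "s ! j = (0, Suc j)" by (simp add: nfp_def)
    then have "snd (s ! j) = snd (s ! i)" using i j by simp
    then have "i = j" using G_snd_inj[OF s j(1) i2(1)] by simp
    then show False using i2 \<open>\<not> nfp s j\<close> by simp
  qed
  then show "v \<in> Suc ` set (NF s)" using j len by (auto simp: set_NF)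
next
  have len: "length s = n" using s by (rule G_len)
  fix v assume "v \<in> Suc ` set (NF s)"
  then obtain j where j: "j \<in> set (NF s)" "v = Suc j" by auto
  then have j2: "j < n" "nfp s j" using len by (auto simp: set_NF)
  then obtain i where i: "i < n" "snd (s ! i) = Suc j" using G_snd_surj[OF s, of "Suc j"] by auto
  have "nfp s i"
  proof (rule ccontr)
    assume "\<not> nfp s i" then have "s ! i = (0, Suc i)" by (simp add: nfp_def)
    then have "i = j" using i by simp
    then show False using j2 \<open>\<not> nfp s i\<close> by simp
  qed
  then have "i \<in> set (NF s)" using i len by (auto simp: set_NF)
  then show "v \<in> VS s" using i j unfolding VS_def by (metis image_eqI)
qed

lemma finite_VS: "finite (VS s)" by (simp add: VS_def)

lemma rk_Suc_NF: assumes s: "s \<in> G l n" and t: "t < length (NF s)"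
  shows "rk s (Suc (NF s ! t)) = Suc t"
proof -
  have "{a \<in> VS s. a \<le> Suc (NF s ! t)} = Suc ` {x \<in> set (NF s). x \<le> NF s ! t}"
    unfolding VS_eq[OF s] by auto
  then have "rk s (Suc (NF s ! t)) = card {x \<in> set (NF s). x \<le> NF s ! t}"
    unfolding rk_def by (simp add: card_image)
  also have "\<dots> = Suc t" by (rule sorted_le_card[OF NF_sorted t])
  finally show ?thesis .
qed

lemma rk_mono: assumes "v \<in> VS s" "w \<in> VS s" "v < w" shows "rk s v < rk s w"
proof -
  have "{a \<in> VS s. a \<le> v} \<subseteq> {a \<in> VS s. a \<le> w}" using assms by auto
  moreover have "w \<in> {a \<in> VS s. a \<le> w}" "w \<notin> {a \<in> VS s. a \<le> v}" using assms by auto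
  ultimately have "{a \<in> VS s. a \<le> v} \<subset> {a \<in> VS s. a \<le> w}" by blast
  then show ?thesis unfolding rk_def by (rule psubset_card_mono[rotated]) (simp add: finite_VS)
qed

lemma rk_less_iff: "v \<in> VS s \<Longrightarrow> w \<in> VS s \<Longrightarrow> rk s v < rk s w \<longleftrightarrow> v < w"
  by (metis less_asym linorder_neqE_nat rk_mono)
lemma rk_inj: "v \<in> VS s \<Longrightarrow> w \<in> VS s \<Longrightarrow> rk s v = rk s w \<Longrightarrow> v = w"
  by (metis less_irrefl linorder_neqE_nat rk_mono)

lemma snd_VS: "i \<in> set (NF s) \<Longrightarrow> snd (s ! i) \<in> VS s" by (simp add: VS_def)
lemma Suc_VS: "s \<in> G l n \<Longrightarrow> i \<in> set (NF s) \<Longrightarrow> Suc i \<in> VS s" by (simp add: VS_eq)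


definition eD :: "(nat \<times> nat) list \<Rightarrow> nat \<Rightarrow> bool" where
  "eD d t \<longleftrightarrow> fst (d ! (t - 1)) = 0 \<and> t < snd (d ! (t - 1))"
definition DD :: "(nat \<times> nat) list \<Rightarrow> nat \<Rightarrow> bool" where
  "DD d t \<longleftrightarrow> cless (d ! t) (d ! (t - 1))"

lemma nf_facts:
  assumes s: "s \<in> G l n" and j: "j < n" "nfp s j"
  shows "j \<in> set (NF s)" "pidx s j < length (Der s)"
        "Der s ! pidx s j = (fst (s ! j), rk s (snd (s ! j)))"
        "rk s (Suc j) = Suc (pidx s j)" "snd (s ! j) \<in> VS s" "Suc j \<in> VS s"
proof -
  have len: "length s = n" using s by (rule G_len)
  show j1: "j \<in> set (NF s)" using j len by (simp add: set_NF)
  have p: "pidx s j < length (NF s)" "NF s ! pidx s j = j" using NF_pidx[of j s] j len by auto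
  show "pidx s j < length (Der s)" using p by (simp add: length_Der)
  show "Der s ! pidx s j = (fst (s ! j), rk s (snd (s ! j)))" using Der_nth[OF p(1)] p(2) by simp
  show "rk s (Suc j) = Suc (pidx s j)" using rk_Suc_NF[OF s p(1)] p(2) by simp
  show "snd (s ! j) \<in> VS s" using j1 by (rule snd_VS)
  show "Suc j \<in> VS s" using Suc_VS[OF s j1] .
qed

lemma fb_nth: "i < length s \<Longrightarrow> fb s ! i = (\<not> nfp s i)" by (simp add: fb_def)
lemma length_fb[simp]: "length (fb s) = length s" by (simp add: fb_def)

lemma ltr_fb: "j < length s \<Longrightarrow> ltr (fb s) j = pidx s (Suc j)"
proof -
  assume j: "j < length s"
  have "take (Suc j) (fb s) = map (\<lambda>i. \<not> nfp s i) [0..<Suc j]"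
    using j by (simp add: fb_def take_map)
  then show ?thesis by (simp add: ltr_def cF_def pidx_def filter_map comp_def)
qed

lemma pidx_Suc: "pidx s (Suc j) = pidx s j + (if nfp s j then 1 else 0)"
  by (simp add: pidx_def)

lemma desc_eq:
  assumes s: "s \<in> G l n" and j: "Suc j < n"
  shows "cless (s ! Suc j) (s ! j) = dsc (eD (Der s)) (DD (Der s)) (fb s) (Suc j)"
proof -
  have len: "length s = n" using s by (rule G_len)
  have jn: "j < n" using j by simp
  have fbj: "fb s ! j = (\<not> nfp s j)" "fb s ! Suc j = (\<not> nfp s (Suc j))" using j len by (auto simp: fb_nth)
  have inj: "\<And>a b. a < n \<Longrightarrow> b < n \<Longrightarrow> snd (s ! a) = snd (s ! b) \<Longrightarrow> a = b" using G_snd_inj[OF s] by blast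
  show ?thesis
  proof (cases "nfp s j")
    case False
    then have sj: "s ! j = (0, Suc j)" by (simp add: nfp_def)
    show ?thesis
    proof (cases "nfp s (Suc j)")
      case False
      then have "s ! Suc j = (0, Suc (Suc j))" by (simp add: nfp_def)
      then show ?thesis using sj fbj \<open>\<not> nfp s j\<close> False by (simp add: dsc_def cless_def)
    next
      case True
      note F = nf_facts[OF s j True]
      obtain c v where cv: "s ! Suc j = (c, v)" by fastforce
      have vne: "v \<noteq> Suc j" using inj[OF j jn] cv sj by auto
      have vne2: "c = 0 \<Longrightarrow> v \<noteq> Suc (Suc j)" using True cv by (auto simp: nfp_def)
      have "dsc (eD (Der s)) (DD (Der s)) (fb s) (Suc j) = (\<not> eD (Der s) (Suc (pidx s (Suc j))))"
        using fbj \<open>\<not> nfp s j\<close> True j len by (simp add: dsc_def ltr_fb pidx_Suc)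
      also have "\<dots> = (\<not> (c = 0 \<and> rk s (Suc (Suc j)) < rk s v))"
        using F(3,4) cv by (simp add: eD_def)
      also have "\<dots> = (\<not> (c = 0 \<and> Suc (Suc j) < v))"
        using rk_less_iff[OF F(6), of v] F(5) cv by simp
      also have "\<dots> = cless (s ! Suc j) (s ! j)"
        using sj cv vne vne2 by (auto simp: cless_def)
      finally show ?thesis by simp
    qed
  next
    case True
    note F = nf_facts[OF s jn True]
    obtain c v where cv: "s ! j = (c, v)" by fastforce
    show ?thesis
    proof (cases "nfp s (Suc j)")
      case False
      then have sj: "s ! Suc j = (0, Suc (Suc j))" by (simp add: nfp_def)
      have vne: "v \<noteq> Suc (Suc j)" using inj[OF jn j] cv sj by auto
      have "dsc (eD (Der s)) (DD (Der s)) (fb s) (Suc j) = eD (Der s) (Suc (pidx s j))"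
        using fbj True False jn len by (simp add: dsc_def ltr_fb pidx_Suc)
      also have "\<dots> = (c = 0 \<and> rk s (Suc j) < rk s v)"
        using F(3,4) cv by (simp add: eD_def)
      also have "\<dots> = (c = 0 \<and> Suc j < v)"
        using rk_less_iff[OF F(6), of v] F(5) cv by simp
      also have "\<dots> = cless (s ! Suc j) (s ! j)"
        using sj cv vne by (auto simp: cless_def)
      finally show ?thesis by simp
    next
      case True2: True
      note F2 = nf_facts[OF s j True2]
      obtain c' v' where cv': "s ! Suc j = (c', v')" by fastforce
      have ps: "pidx s (Suc j) = Suc (pidx s j)" using True by (simp add: pidx_Suc)
      have "dsc (eD (Der s)) (DD (Der s)) (fb s) (Suc j) = DD (Der s) (Suc (pidx s j))"
        using fbj True True2 jn len by (simp add: dsc_def ltr_fb pidx_Suc)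
      also have "\<dots> = cless (c', rk s v') (c, rk s v)"
        using F(3) F2(3) ps cv cv' by (simp add: DD_def)
      also have "\<dots> = cless (c', v') (c, v)"
        using rk_less_iff[OF F2(5) F(5)] cv cv' by (auto simp: cless_def)
      finally show ?thesis using cv cv' by simp
    qed
  qed
qed

lemma maj_Mt: assumes s: "s \<in> G l n" shows "maj s = Mt (eD (Der s)) (DD (Der s)) (fb s)"
  unfolding maj_def Mt_def length_fb
proof (rule sum.cong)
  fix i assume i: "i \<in> {1..<length s}"
  then obtain j where j: "i = Suc j" by (cases i) auto
  have "Suc j < n" using i j G_len[OF s] by simp
  from desc_eq[OF s this] show "(if cless (s ! i) (s ! (i - 1)) then i else 0) = (if dsc (eD (Der s)) (DD (Der s)) (fb s) i then i else 0)"
    using j by simp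
qed simp


lemma der_prop: assumes s: "s \<in> G l n" and t: "t < length (Der s)"
  shows "Der s ! t \<noteq> (0, Suc t)"
proof
  assume eq: "Der s ! t = (0, Suc t)"
  have tn: "t < length (NF s)" using t by (simp add: length_Der)
  define j where "j = NF s ! t"
  have jm: "j \<in> set (NF s)" using tn by (simp add: j_def)
  then have j: "j < n" "nfp s j" using G_len[OF s] by (auto simp: set_NF)
  note F = nf_facts[OF s j]
  have p: "pidx s j = t" using pidx_NF[OF tn] by (simp add: j_def)
  have "fst (s ! j) = 0" "rk s (snd (s ! j)) = rk s (Suc j)" using F(3,4) eq p by auto
  moreover have "snd (s ! j) = Suc j" using rk_inj[OF F(5) F(6)] calculation(2) .
  ultimately have "s ! j = (0, Suc j)" by (metis prod.collapse)
  then show False using j(2) by (simp add: nfp_def)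
qed

lemma cons_Der: assumes s: "s \<in> G l n" and t: "1 \<le> t" "t < length (Der s)"
  shows "(eD (Der s) t \<and> \<not> eD (Der s) (Suc t) \<longrightarrow> DD (Der s) t) \<and> (\<not> eD (Der s) t \<and> eD (Der s) (Suc t) \<longrightarrow> \<not> DD (Der s) t)"
proof -
  have dp: "Der s ! t \<noteq> (0, Suc t)" by (rule der_prop[OF s t(2)])
  obtain c1 r1 where 1: "Der s ! (t - 1) = (c1, r1)" by fastforce
  obtain c2 r2 where 2: "Der s ! t = (c2, r2)" by fastforce
  show ?thesis using 1 2 dp t(1) by (auto simp: eD_def DD_def cless_def)
qed

lemma majD_maj: "majD (DD d) (length d) = maj d"
  by (simp add: majD_def maj_def DD_def)

definition FS :: "bool list \<Rightarrow> nat set" where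
  "FS b = {i \<in> {1..length b}. b ! (i - 1)}"
definition psi :: "bool list \<Rightarrow> nat" where
  "psi b = (let L = sorted_list_of_set (FS b) in \<Sum>j<length L. L ! j - (j + 1))"

lemma card_FS: "card (FS b) = cT b"
proof -
  have "FS b = Suc ` {i. i < length b \<and> b ! i}"
  proof (intro equalityI subsetI)
    fix i assume "i \<in> FS b"
    then have "i = Suc (i - 1)" "i - 1 < length b" "b ! (i - 1)" by (auto simp: FS_def)
    then show "i \<in> Suc ` {i. i < length b \<and> b ! i}" by blast
  qed (auto simp: FS_def)
  then have "card (FS b) = card {i. i < length b \<and> b ! i}" by (simp add: card_image)
  then show ?thesis by (simp add: cT_def length_filter_conv_card)
qed

lemma FS_app: "FS (b @ [x]) = (if x then insert (Suc (length b)) (FS b) else FS b)"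
  unfolding FS_def by (auto simp: nth_append le_Suc_eq)

lemma finite_FS: "finite (FS b)" by (simp add: FS_def)

lemma psi_app: "psi (b @ [x]) = psi b + (if x then cF b else 0)"
proof (cases x)
  case False then show ?thesis by (simp add: psi_def FS_app)
next
  case True
  define L where "L = sorted_list_of_set (FS b)"
  have nin: "Suc (length b) \<notin> FS b" by (simp add: FS_def)
  have le: "\<forall>y\<in>set L. y \<le> Suc (length b)" by (auto simp: L_def finite_FS FS_def)
  have "sorted_list_of_set (FS (b @ [x])) = L @ [Suc (length b)]"
    using True by (simp add: FS_app sorted_list_of_set_insert[OF finite_FS nin] L_def sorted_insort_is_snoc le[unfolded L_def])
  then have "psi (b @ [x]) = (\<Sum>j<Suc (length L). (L @ [Suc (length b)]) ! j - (j + 1))"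
    by (simp add: psi_def)
  also have "\<dots> = (\<Sum>j<length L. L ! j - (j + 1)) + (Suc (length b) - (length L + 1))"
    by (simp add: nth_append)
  also have "length L = cT b" by (simp add: L_def card_FS[symmetric] finite_FS)
  also have "Suc (length b) - (cT b + 1) = cF b" using cTF_len[of b] by simp
  finally show ?thesis using True by (simp add: psi_def L_def card_FS)
qed

lemma psi_phi: "psi b = phi b"
proof (induction b rule: rev_induct)
  case Nil then show ?case by (simp add: psi_def FS_def)
next
  case (snoc x b) then show ?case by (simp add: psi_app phi_app)
qed

lemma FIX_FS: "FIX s = FS (fb s)"
  unfolding FIX_def FS_def by (auto simp: fb_nth nfp_def)

lemma fixn_cT: "fixn s = cT (fb s)"
  by (simp add: fixn_def FIX_FS card_FS)

lemma maf_eq: "maf s = maj (Der s) + phi (fb s)"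
  unfolding maf_def psi_phi[symmetric] psi_def FIX_FS ..

lemma length_Der_cF: "length (Der s) = cF (fb s)"
  by (simp add: length_Der NF_def cF_def fb_def filter_map comp_def)

lemma fb_S: "fb s \<in> S (length (Der s)) (fixn s)"
  by (simp add: S_def fixn_cT length_Der_cF)

lemma col_Der: "col s = col (Der s)"
proof -
  have "col (Der s) = sum_list (map (\<lambda>i. fst (s ! i)) (filter (nfp s) [0..<length s]))"
    by (simp add: col_def Der_alt NF_def comp_def)
  also have "\<dots> = sum_list (map (\<lambda>i. fst (s ! i)) [0..<length s])"
    by (rule sum_list_map_filter) (auto simp: nfp_def)
  also have "map (\<lambda>i. fst (s ! i)) [0..<length s] = map fst s" by (rule nth_equalityI) simp_all
  then have "sum_list (map (\<lambda>i. fst (s ! i)) [0..<length s]) = col s" by (simp add: col_def)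
  finally show ?thesis ..
qed

lemma card_filter_Suc: "card {i \<in> {1..n}. P i} = length (filter (\<lambda>j. P (Suc j)) [0..<n])"
proof -
  have "{i \<in> {1..n}. P i} = Suc ` {j. j < n \<and> P (Suc j)}"
  proof (intro equalityI subsetI)
    fix i assume "i \<in> {i \<in> {1..n}. P i}"
    then have "i = Suc (i - 1)" "i - 1 < n" "P (Suc (i - 1))" by auto
    then show "i \<in> Suc ` {j. j < n \<and> P (Suc j)}" by blast
  qed auto
  then have "card {i \<in> {1..n}. P i} = card {j. j < n \<and> P (Suc j)}" by (simp add: card_image)
  also have "{j. j < n \<and> P (Suc j)} = {i. i < length [0..<n] \<and> P (Suc ([0..<n] ! i))}"
    by auto
  also have "card \<dots> = length (filter (\<lambda>j. P (Suc j)) [0..<n])"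
    by (simp only: length_filter_conv_card)
  finally show ?thesis .
qed

lemma len_filter_idx: "length (filter P xs) = length (filter (\<lambda>t. P (xs ! t)) [0..<length xs])"
proof -
  have "{i. i < length [0..<length xs] \<and> P (xs ! ([0..<length xs] ! i))} = {i. i < length xs \<and> P (xs ! i)}"
    by auto
  then show ?thesis by (simp only: length_filter_conv_card)
qed

lemma exc_Der: assumes s: "s \<in> G l n" shows "exc s = exc (Der s)"
proof -
  have len: "length s = n" using s by (rule G_len)
  define Q where "Q j = cless (0, Suc j) (s ! j)" for j
  have "exc s = length (filter Q [0..<n])"
    unfolding exc_def card_filter_Suc len Q_def by simp
  also have "filter Q [0..<n] = filter Q (NF s)"
    unfolding NF_def len filter_filter by (rule filter_cong) (auto simp: Q_def nfp_def cless_def)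
  also have "length (filter Q (NF s)) = length (filter (\<lambda>t. Q (NF s ! t)) [0..<length (NF s)])"
    by (rule len_filter_idx)
  also have "filter (\<lambda>t. Q (NF s ! t)) [0..<length (NF s)] = filter (\<lambda>t. cless (0, Suc t) (Der s ! t)) [0..<length (NF s)]"
  proof (rule filter_cong)
    fix t assume "t \<in> set [0..<length (NF s)]"
    then have tn: "t < length (NF s)" by simp
    define j where "j = NF s ! t"
    have jm: "j \<in> set (NF s)" using tn by (simp add: j_def)
    then have j: "j < n" "nfp s j" using len by (auto simp: set_NF)
    note F = nf_facts[OF s j]
    have p: "pidx s j = t" using pidx_NF[OF tn] by (simp add: j_def)
    obtain c v where cv: "s ! j = (c, v)" by fastforce
    have "cless (0, Suc t) (Der s ! t) = (c = 0 \<and> rk s (Suc j) < rk s v)"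
      using F(3,4) p cv by (auto simp: cless_def)
    also have "\<dots> = (c = 0 \<and> Suc j < v)" using rk_less_iff[OF F(6), of v] F(5) cv by simp
    also have "\<dots> = Q j" using cv by (auto simp: Q_def cless_def)
    finally show "Q (NF s ! t) = cless (0, Suc t) (Der s ! t)" by (simp add: j_def)
  qed simp
  also have "length \<dots> = exc (Der s)"
    unfolding exc_def card_filter_Suc by (simp add: length_Der)
  finally show ?thesis .
qed

lemma Der_fb_inj: assumes s: "s \<in> G l n" and s': "s' \<in> G l n" and D: "Der s = Der s'" and f: "fb s = fb s'"
  shows "s = s'"
proof -
  have len: "length s = n" "length s' = n" using s s' by (auto simp: G_len)
  have nf: "\<And>i. i < n \<Longrightarrow> nfp s i = nfp s' i"
    using f len by (metis fb_nth)
  have NFe: "NF s = NF s'" unfolding NF_def len by (rule filter_cong) (auto simp: nf)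
  have rke: "rk s = rk s'" unfolding rk_def[abs_def] VS_eq[OF s] VS_eq[OF s'] NFe ..
  show ?thesis
  proof (rule nth_equalityI)
    show "length s = length s'" using len by simp
  next
    fix i assume "i < length s"
    then have i: "i < n" using len by simp
    show "s ! i = s' ! i"
    proof (cases "nfp s i")
      case False
      then show ?thesis using nf[OF i] by (simp add: nfp_def)
    next
      case True
      note F = nf_facts[OF s i True]
      note F' = nf_facts[OF s' i True[unfolded nf[OF i]]]
      have "filter (nfp s) [0..<i] = filter (nfp s') [0..<i]" by (rule filter_cong) (use nf i in auto)
      then have pe: "pidx s i = pidx s' i" unfolding pidx_def by simp
      have "(fst (s ! i), rk s (snd (s ! i))) = (fst (s' ! i), rk s (snd (s' ! i)))"
        using F(3) F'(3) D pe rke by simp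
      moreover have "snd (s' ! i) \<in> VS s" using F'(5) VS_eq[OF s] VS_eq[OF s'] NFe by simp
      ultimately show ?thesis using rk_inj[OF F(5)] by (simp add: prod_eq_iff)
    qed
  qed
qed


lemma fidx: "j < n \<Longrightarrow> P j \<Longrightarrow> length (filter P [0..<j]) < length (filter P [0..<n]) \<and> filter P [0..<n] ! length (filter P [0..<j]) = j"
proof -
  assume a: "j < n" "P j"
  have "filter P [0..<n] = filter P [0..<j] @ j # filter P [Suc j..<n]"
    using upt_split3[OF a(1)] a(2) by simp
  then show ?thesis by (simp add: nth_append)
qed

lemma fidx_inv: assumes t: "t < length (filter P [0..<n])"
  shows "length (filter P [0..<(filter P [0..<n] ! t)]) = t"
proof -
  define xs where "xs = filter P [0..<n]"
  have m: "xs ! t \<in> set xs" using t unfolding xs_def by (rule nth_mem)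
  then have "xs ! t \<in> {x \<in> set [0..<n]. P x}" unfolding xs_def set_filter .
  then have a: "xs ! t < n" "P (xs ! t)" by auto
  from fidx[where P=P, OF a] have "xs ! length (filter P [0..<xs ! t]) = xs ! t" "length (filter P [0..<xs ! t]) < length xs"
    by (auto simp: xs_def)
  moreover have "distinct xs" by (simp add: xs_def)
  ultimately show ?thesis using t nth_eq_iff_index_eq xs_def by blast
qed

lemma Suc_image_lessThan: "Suc ` {..<k} = {1..k}"
proof (intro equalityI subsetI)
  fix x assume "x \<in> {1..k}"
  then have "x = Suc (x - 1)" "x - 1 < k" by auto
  then show "x \<in> Suc ` {..<k}" by blast
qed auto

lemma Der_perm: assumes s: "s \<in> G l n"
  shows "distinct (map snd (Der s))" "set (map snd (Der s)) = {1..length (Der s)}"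
proof -
  have len: "length s = n" using s by (rule G_len)
  have ms: "map snd (Der s) = map (\<lambda>i. rk s (snd (s ! i))) (NF s)" by (simp add: Der_alt)
  show "distinct (map snd (Der s))" unfolding ms distinct_map
  proof
    show "distinct (NF s)" by (rule NF_distinct)
    show "inj_on (\<lambda>i. rk s (snd (s ! i))) (set (NF s))"
    proof (rule inj_onI)
      fix i j assume ij: "i \<in> set (NF s)" "j \<in> set (NF s)" "rk s (snd (s ! i)) = rk s (snd (s ! j))"
      then have "snd (s ! i) = snd (s ! j)" using rk_inj snd_VS by metis
      moreover have "i < n" "j < n" using ij len by (auto simp: set_NF)
      ultimately show "i = j" using G_snd_inj[OF s] by blast
    qed
  qed
  have "set (map snd (Der s)) = (\<lambda>t. rk s (Suc (NF s ! t))) ` {..<length (NF s)}"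
  proof -
    have "set (map snd (Der s)) = rk s ` VS s" unfolding ms VS_def by (auto simp: image_image)
    also have "\<dots> = rk s ` Suc ` set (NF s)" by (simp add: VS_eq[OF s])
    also have "set (NF s) = (\<lambda>t. NF s ! t) ` {..<length (NF s)}" by (auto simp: in_set_conv_nth)
    finally show ?thesis by (simp add: image_image)
  qed
  also have "\<dots> = Suc ` {..<length (NF s)}" using rk_Suc_NF[OF s] by (auto simp: image_iff)
  also have "\<dots> = {1..length (Der s)}" by (simp add: length_Der Suc_image_lessThan)
  finally show "set (map snd (Der s)) = {1..length (Der s)}" .
qed


definition NBl :: "bool list \<Rightarrow> nat list" where
  "NBl b = filter (\<lambda>i. \<not> b ! i) [0..<length b]"
definition pb :: "bool list \<Rightarrow> nat \<Rightarrow> nat" where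
  "pb b i = length (filter (\<lambda>i. \<not> b ! i) [0..<i])"
definition bld :: "(nat \<times> nat) list \<Rightarrow> bool list \<Rightarrow> (nat \<times> nat) list" where
  "bld d b = map (\<lambda>i. if b ! i then (0, Suc i) else (fst (d ! pb b i), Suc (NBl b ! (snd (d ! pb b i) - 1)))) [0..<length b]"

lemma surj_fb:
  assumes s0: "s0 \<in> G l n" and l: "1 \<le> l" and b: "b \<in> S (length (Der s0)) (fixn s0)"
  shows "\<exists>s\<in>G l n. Der s = Der s0 \<and> fb s = b"
proof -
  define d where "d = Der s0"
  define m where "m = length d"
  have lenb: "length b = n"
  proof -
    have "cT b = cT (fb s0)" "cF b = cF (fb s0)" using b by (auto simp: S_def fixn_cT length_Der_cF)
    then have "length b = length (fb s0)" using cTF_len[of b] cTF_len[of "fb s0"] by simp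
    then show ?thesis using G_len[OF s0] by simp
  qed
  define NB where "NB = NBl b"
  have lenNB: "length NB = m"
  proof -
    have "cF b = m" using b by (simp add: S_def m_def d_def)
    moreover have "cF b = length (filter (\<lambda>t. \<not> b ! t) [0..<length b])"
      unfolding cF_def by (rule len_filter_idx)
    ultimately show ?thesis by (simp add: NB_def NBl_def)
  qed
  have NBmem: "NB ! t < n \<and> \<not> b ! (NB ! t)" if t: "t < m" for t
  proof -
    have "NB ! t \<in> set NB" using t lenNB by simp
    then show ?thesis by (simp add: NB_def NBl_def lenb)
  qed
  have NBdist: "distinct NB" by (simp add: NB_def NBl_def)
  have pbf: "pb b i < m \<and> NB ! pb b i = i" if "i < n" "\<not> b ! i" for i
    using fidx[where P="\<lambda>i. \<not> b ! i", OF that] lenNB by (simp add: NB_def NBl_def pb_def lenb)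
  have pbinv: "pb b (NB ! t) = t" if "t < m" for t
    using fidx_inv[where P="\<lambda>i. \<not> b ! i" and n=n and t=t] that lenNB by (simp add: NB_def NBl_def pb_def lenb)
  note dperm = Der_perm[OF s0, folded d_def, folded m_def]
  have dr: "1 \<le> snd (d ! t) \<and> snd (d ! t) \<le> m" if "t < m" for t
  proof -
    have "snd (d ! t) \<in> set (map snd d)" using that by (simp add: m_def)
    then show ?thesis using dperm(2) by auto
  qed
  have dc: "fst (d ! t) < l" if "t < m" for t
  proof -
    have tn: "t < length (NF s0)" using that by (simp add: m_def d_def length_Der)
    then have "NF s0 ! t \<in> set (NF s0)" by simp
    then have "NF s0 ! t < n" using G_len[OF s0] by (simp add: set_NF)
    then show ?thesis using Der_nth[OF tn] G_fst[OF s0] by (simp add: d_def)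
  qed
  have dp: "d ! t \<noteq> (0, Suc t)" if "t < m" for t using der_prop[OF s0] that by (simp add: d_def m_def)
  have dsinj: "t = t'" if "t < m" "t' < m" "snd (d ! t) = snd (d ! t')" for t t'
    using dperm(1) that unfolding distinct_conv_nth m_def by (metis length_map nth_map)
  define s where "s = bld d b"
  have lens: "length s = n" by (simp add: s_def bld_def lenb)
  have sfix: "s ! i = (0, Suc i)" if "i < n" "b ! i" for i using that by (simp add: s_def bld_def lenb)
  have snf: "s ! i = (fst (d ! pb b i), Suc (NB ! (snd (d ! pb b i) - 1)))" if "i < n" "\<not> b ! i" for i
    using that by (simp add: s_def bld_def lenb NB_def)
  have fbs: "fb s = b"
  proof (rule nth_equalityI)
    show "length (fb s) = length b" using lens lenb by simp
  next
    fix i assume "i < length (fb s)"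
    then have i: "i < n" using lens by simp
    show "fb s ! i = b ! i"
    proof (cases "b ! i")
      case True then show ?thesis using sfix[OF i] i lens by (simp add: fb_nth nfp_def)
    next
      case False
      define t where "t = pb b i"
      have t: "t < m" "NB ! t = i" using pbf[OF i False] by (auto simp: t_def)
      have "s ! i \<noteq> (0, Suc i)"
      proof
        assume eq: "s ! i = (0, Suc i)"
        then have c0: "fst (d ! t) = 0" and "NB ! (snd (d ! t) - 1) = NB ! t"
          using snf[OF i False] t by (auto simp: t_def)
        moreover have "snd (d ! t) - 1 < m" using dr[OF t(1)] by linarith
        ultimately have "snd (d ! t) - 1 = t" using nth_eq_iff_index_eq[OF NBdist, of "snd (d ! t) - 1" t] t(1) lenNB by simp
        then have "snd (d ! t) = Suc t" using dr[OF t(1)] by linarith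
        then have "d ! t = (0, Suc t)" using c0 by (metis prod.collapse)
        then show False using dp[OF t(1)] by simp
      qed
      then show ?thesis using False i lens by (simp add: fb_nth nfp_def)
    qed
  qed
  have val_range: "snd (s ! i) \<in> {1..n}" if "i < n" for i
  proof (cases "b ! i")
    case True then show ?thesis using sfix[OF that] that by simp
  next
    case False
    have "pb b i < m" using pbf[OF that False] by simp
    then have "snd (d ! pb b i) - 1 < m" using dr[of "pb b i"] by linarith
    then have "NB ! (snd (d ! pb b i) - 1) < n" using NBmem by blast
    then show ?thesis using snf[OF that False] by simp
  qed
  have val_inj: "i = j" if ij: "i < n" "j < n" "snd (s ! i) = snd (s ! j)" for i j
  proof (cases "b ! i")
    case True
    show ?thesis
    proof (cases "b ! j")
      case True
      have "snd (s ! i) = Suc i" "snd (s ! j) = Suc j" using sfix[OF ij(1) \<open>b ! i\<close>] sfix[OF ij(2) True] by simp_all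
      then show ?thesis using ij(3) by linarith
    next
      case False
      have pj: "pb b j < m" using pbf[OF ij(2) False] by (rule conjunct1)
      have r: "snd (d ! pb b j) - 1 < m" using dr[OF pj] by linarith
      have e1: "snd (s ! j) = Suc (NB ! (snd (d ! pb b j) - 1))" by (simp only: snf[OF ij(2) False] snd_conv)
      have e2: "snd (s ! i) = Suc i" by (simp only: sfix[OF ij(1) True] snd_conv)
      have "Suc i = Suc (NB ! (snd (d ! pb b j) - 1))" using ij(3) e1 e2 by linarith
      then have "i = NB ! (snd (d ! pb b j) - 1)" by (rule Suc_inject)
      then have "\<not> b ! i" using NBmem[OF r] by simp
      then show ?thesis using True by (rule notE)
    qed
  next
    case False
    show ?thesis
    proof (cases "b ! j")
      case True
      have pi: "pb b i < m" using pbf[OF ij(1) False] by (rule conjunct1)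
      have r: "snd (d ! pb b i) - 1 < m" using dr[OF pi] by linarith
      have e1: "snd (s ! i) = Suc (NB ! (snd (d ! pb b i) - 1))" by (simp only: snf[OF ij(1) False] snd_conv)
      have e2: "snd (s ! j) = Suc j" by (simp only: sfix[OF ij(2) True] snd_conv)
      have "Suc j = Suc (NB ! (snd (d ! pb b i) - 1))" using ij(3) e1 e2 by linarith
      then have "j = NB ! (snd (d ! pb b i) - 1)" by (rule Suc_inject)
      then have "\<not> b ! j" using NBmem[OF r] by simp
      then show ?thesis using True by (rule notE)
    next
      case False2: False
      have pi: "pb b i < m" "NB ! pb b i = i" using pbf[OF ij(1) False] by auto
      have pj: "pb b j < m" "NB ! pb b j = j" using pbf[OF ij(2) False2] by auto
      have ri: "snd (d ! pb b i) - 1 < m" "1 \<le> snd (d ! pb b i)" using dr[OF pi(1)] by linarith+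
      have rj: "snd (d ! pb b j) - 1 < m" "1 \<le> snd (d ! pb b j)" using dr[OF pj(1)] by linarith+
      have "snd (s ! i) = Suc (NB ! (snd (d ! pb b i) - 1))" "snd (s ! j) = Suc (NB ! (snd (d ! pb b j) - 1))"
        using snf[OF ij(1) False] snf[OF ij(2) False2] by simp_all
      then have "NB ! (snd (d ! pb b i) - 1) = NB ! (snd (d ! pb b j) - 1)" using ij(3) by linarith
      then have "snd (d ! pb b i) - 1 = snd (d ! pb b j) - 1"
        using nth_eq_iff_index_eq[OF NBdist, of "snd (d ! pb b i) - 1" "snd (d ! pb b j) - 1"] ri rj lenNB by simp
      then have "snd (d ! pb b i) = snd (d ! pb b j)" using ri rj by linarith
      then have "pb b i = pb b j" by (rule dsinj[OF pi(1) pj(1)])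
      then show ?thesis using pi(2) pj(2) by metis
    qed
  qed
  have sG: "s \<in> G l n"
  proof -
    have dist: "distinct (map snd s)"
      unfolding distinct_conv_nth using val_inj lens by auto
    have sub: "set (map snd s) \<subseteq> {1..n}"
    proof
      fix v assume "v \<in> set (map snd s)"
      then obtain i where "i < n" "v = snd (s ! i)" using lens by (auto simp: in_set_conv_nth)
      then show "v \<in> {1..n}" using val_range by simp
    qed
    have "card (set (map snd s)) = n" using distinct_card[OF dist] lens by simp
    then have set_eq: "set (map snd s) = {1..n}" using sub by (intro card_subset_eq) auto
    have col: "\<forall>x\<in>set s. fst x < l"
    proof
      fix x assume "x \<in> set s"
      then obtain i where i: "i < n" "x = s ! i" using lens by (auto simp: in_set_conv_nth)
      show "fst x < l"
      proof (cases "b ! i")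
        case True then show ?thesis using sfix[OF i(1)] i l by simp
      next
        case False then show ?thesis using snf[OF i(1)] i dc pbf by simp
      qed
    qed
    show ?thesis unfolding G_def using lens dist set_eq col by simp
  qed
  have nfps: "nfp s i = (\<not> b ! i)" if "i < n" for i using fbs fb_nth[of i s] that lens by simp
  have NFs: "NF s = NB" unfolding NF_def NB_def NBl_def lens lenb
    by (rule filter_cong) (use nfps in auto)
  have Ders: "Der s = d"
  proof (rule nth_equalityI)
    show "length (Der s) = length d" using NFs lenNB by (simp add: length_Der m_def)
  next
    fix t assume "t < length (Der s)"
    then have t: "t < m" "t < length (NF s)" using NFs lenNB by (auto simp: length_Der)
    define i where "i = NB ! t"
    have i: "i < n" "\<not> b ! i" using NBmem[OF t(1)] by (auto simp: i_def)
    have p: "pb b i = t" using pbinv[OF t(1)] by (simp add: i_def)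
    have r: "snd (d ! t) - 1 < length (NF s)" "1 \<le> snd (d ! t)" using dr[OF t(1)] NFs lenNB by auto
    have "Der s ! t = (fst (s ! i), rk s (snd (s ! i)))" using Der_nth[OF t(2)] NFs by (simp add: i_def)
    also have "\<dots> = (fst (d ! t), rk s (Suc (NF s ! (snd (d ! t) - 1))))" using snf[OF i] p NFs by simp
    also have "rk s (Suc (NF s ! (snd (d ! t) - 1))) = snd (d ! t)" using rk_Suc_NF[OF sG r(1)] r(2) by simp
    finally show "Der s ! t = d ! t" by simp
  qed
  show ?thesis using sG Ders fbs by (auto simp: d_def)
qed



lemma glue:
  assumes fin: "finite A"
    and eq: "\<And>x v. x \<in> A \<Longrightarrow> card {y\<in>A. \<kappa> y = \<kappa> x \<and> f y = v} = card {y\<in>A. \<kappa> y = \<kappa> x \<and> g y = v}"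
  shows "\<exists>\<Psi>. bij_betw \<Psi> A A \<and> (\<forall>x\<in>A. \<kappa> (\<Psi> x) = \<kappa> x \<and> g (\<Psi> x) = f x)"
proof -
  define A1 where "A1 p = {y\<in>A. \<kappa> y = fst p \<and> f y = snd p}" for p
  define A2 where "A2 p = {y\<in>A. \<kappa> y = fst p \<and> g y = snd p}" for p
  have ceq: "card (A1 p) = card (A2 p)" for p
  proof (cases "A1 p \<union> A2 p = {}")
    case True then show ?thesis by auto
  next
    case False
    then obtain x where x: "x \<in> A" "\<kappa> x = fst p" by (auto simp: A1_def A2_def)
    show ?thesis using eq[OF x(1), of "snd p"] x(2) by (simp add: A1_def A2_def)
  qed
  have "\<forall>p. \<exists>h. bij_betw h (A1 p) (A2 p)"
  proof
    fix p show "\<exists>h. bij_betw h (A1 p) (A2 p)"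
      by (rule finite_same_card_bij) (use fin ceq in \<open>auto simp: A1_def A2_def\<close>)
  qed
  then obtain H where H: "\<And>p. bij_betw (H p) (A1 p) (A2 p)" by metis
  define \<Psi> where "\<Psi> x = H (\<kappa> x, f x) x" for x
  have P: "\<Psi> x \<in> A \<and> \<kappa> (\<Psi> x) = \<kappa> x \<and> g (\<Psi> x) = f x" if x: "x \<in> A" for x
  proof -
    have "x \<in> A1 (\<kappa> x, f x)" using x by (simp add: A1_def)
    then have "\<Psi> x \<in> A2 (\<kappa> x, f x)" unfolding \<Psi>_def using H bij_betw_apply by metis
    then show ?thesis by (simp add: A2_def)
  qed
  have inj: "inj_on \<Psi> A"
  proof (rule inj_onI)
    fix x y assume xy: "x \<in> A" "y \<in> A" "\<Psi> x = \<Psi> y"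
    then have e: "\<kappa> x = \<kappa> y" "f x = f y" using P by metis+
    have "x \<in> A1 (\<kappa> x, f x)" "y \<in> A1 (\<kappa> x, f x)" using xy e by (auto simp: A1_def)
    moreover have "H (\<kappa> x, f x) x = H (\<kappa> x, f x) y" using xy(3) e by (simp add: \<Psi>_def)
    ultimately show "x = y" using H[of "(\<kappa> x, f x)"] by (auto simp: bij_betw_def inj_on_def)
  qed
  have img: "\<Psi> ` A = A"
  proof (intro equalityI subsetI)
    fix y assume "y \<in> \<Psi> ` A" then show "y \<in> A" using P by auto
  next
    fix y assume y: "y \<in> A"
    define p where "p = (\<kappa> y, g y)"
    have "y \<in> A2 p" using y by (simp add: A2_def p_def)
    moreover have "H p ` A1 p = A2 p" using H[of p] by (simp add: bij_betw_def)
    ultimately obtain x where x: "x \<in> A1 p" "H p x = y" by (metis imageE)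
    then have "x \<in> A" "(\<kappa> x, f x) = p" by (auto simp: A1_def)
    then show "y \<in> \<Psi> ` A" using x by (auto simp: \<Psi>_def)
  qed
  show ?thesis using inj img P by (auto simp: bij_betw_def)
qed

lemma count_img: "finite A \<Longrightarrow> count (image_mset f (mset_set A)) v = card {x\<in>A. f x = v}"
proof (induction A rule: finite_induct)
  case empty then show ?case by simp
next
  case (insert a A)
  have "{x \<in> insert a A. f x = v} = (if f a = v then insert a {x\<in>A. f x = v} else {x\<in>A. f x = v})" by auto
  then show ?case using insert by auto
qed

lemma finite_G: "finite (G l n)"
proof -
  have "G l n \<subseteq> {xs. set xs \<subseteq> {..<l} \<times> {1..n} \<and> length xs = n}"
  proof
    fix s assume s: "s \<in> G l n"
    have "x \<in> {..<l} \<times> {1..n}" if "x \<in> set s" for x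
    proof -
      have "fst x < l" using s that by (auto simp: G_def)
      moreover have "snd x \<in> set (map snd s)" using that by simp
      then have "snd x \<in> {1..n}" using s by (simp only: G_def mem_Collect_eq)
      ultimately show ?thesis by (cases x) auto
    qed
    then show "s \<in> {xs. set xs \<subseteq> {..<l} \<times> {1..n} \<and> length xs = n}" using s by (auto simp: G_def)
  qed
  moreover have "finite {xs. set xs \<subseteq> {..<l} \<times> {1..n} \<and> length xs = n}"
    by (rule finite_lists_length_eq) simp
  ultimately show ?thesis by (rule finite_subset)
qed

lemma fiber_eq:
  assumes x: "x \<in> G l n" and l: "1 \<le> l"
  shows "card {y\<in>G l n. (Der y, fixn y) = (Der x, fixn x) \<and> maj y = v}
       = card {y\<in>G l n. (Der y, fixn y) = (Der x, fixn x) \<and> maf y = v}"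
proof -
  define d where "d = Der x"
  define k where "k = fixn x"
  define m where "m = length d"
  define C where "C = {y\<in>G l n. Der y = d \<and> fixn y = k}"
  have bij: "bij_betw fb C (S m k)"
    unfolding bij_betw_def
  proof
    show "inj_on fb C"
    proof (rule inj_onI)
      fix y z assume yz: "y \<in> C" "z \<in> C" "fb y = fb z"
      then have "y \<in> G l n" "z \<in> G l n" "Der y = Der z" by (auto simp: C_def)
      then show "y = z" using Der_fb_inj yz(3) by blast
    qed
    show "fb ` C = S m k"
    proof (intro equalityI subsetI)
      fix b assume "b \<in> fb ` C"
      then obtain y where "y \<in> C" "b = fb y" by auto
      then show "b \<in> S m k" using fb_S[of y] by (simp add: C_def m_def)
    next
      fix b assume "b \<in> S m k"
      then have "b \<in> S (length (Der x)) (fixn x)" by (simp add: m_def d_def k_def)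
      from surj_fb[OF x l this] obtain y where "y \<in> G l n" "Der y = Der x" "fb y = b" by blast
      moreover then have "fixn y = k" using fixn_cT[of y] fixn_cT[of x] \<open>b \<in> S m k\<close> by (simp add: S_def k_def)
      ultimately show "b \<in> fb ` C" by (auto simp: C_def d_def)
    qed
  qed
  have transfer: "card {y\<in>C. F (fb y) = v} = card {b\<in>S m k. F b = v}" for F
  proof -
    have "inj_on fb {y\<in>C. F (fb y) = v}" using bij by (auto simp: bij_betw_def inj_on_def)
    moreover have "fb ` {y\<in>C. F (fb y) = v} = {b\<in>S m k. F b = v}" using bij by (auto simp: bij_betw_def)
    ultimately show ?thesis using card_image[of fb "{y\<in>C. F (fb y) = v}"] by simp
  qed
  have e1: "{y\<in>G l n. (Der y, fixn y) = (Der x, fixn x) \<and> maj y = v} = {y\<in>C. Mt (eD d) (DD d) (fb y) = v}"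
  proof (intro Collect_cong)
    fix y show "(y \<in> G l n \<and> (Der y, fixn y) = (Der x, fixn x) \<and> maj y = v) = (y \<in> C \<and> Mt (eD d) (DD d) (fb y) = v)"
      unfolding C_def d_def k_def using maj_Mt[of y l n] by auto
  qed
  have e2: "{y\<in>G l n. (Der y, fixn y) = (Der x, fixn x) \<and> maf y = v} = {y\<in>C. maj d + phi (fb y) = v}"
  proof (intro Collect_cong)
    fix y show "(y \<in> G l n \<and> (Der y, fixn y) = (Der x, fixn x) \<and> maf y = v) = (y \<in> C \<and> maj d + phi (fb y) = v)"
      unfolding C_def d_def k_def using maf_eq[of y] by auto
  qed
  have cons: "\<And>t. 1 \<le> t \<Longrightarrow> t < m \<Longrightarrow> (eD d t \<and> \<not> eD d (Suc t) \<longrightarrow> DD d t) \<and> (\<not> eD d t \<and> eD d (Suc t) \<longrightarrow> \<not> DD d t)"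
    using cons_Der[OF x] by (simp add: d_def m_def)
  have "image_mset (Mt (eD d) (DD d)) (mset_set (S m k)) = shm (maj d) (Qg (Suc m) k)"
    using Mt_dist[where e="eD d" and D="DD d" and m=m and k=k, OF cons] majD_maj[of d] by (simp add: m_def)
  also have "\<dots> = image_mset (\<lambda>b. maj d + phi b) (mset_set (S m k))"
    by (simp add: phi_dist[symmetric] shm_def multiset.map_comp comp_def)
  finally have "count (image_mset (Mt (eD d) (DD d)) (mset_set (S m k))) v = count (image_mset (\<lambda>b. maj d + phi b) (mset_set (S m k))) v"
    by simp
  then have "card {b\<in>S m k. Mt (eD d) (DD d) b = v} = card {b\<in>S m k. maj d + phi b = v}"
    by (simp add: count_img finite_S)
  then show ?thesis using transfer[of "Mt (eD d) (DD d)"] transfer[of "\<lambda>b. maj d + phi b"] e1 e2 by simp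
qed

theorem mainTheorem3:
  fixes l n :: nat
  assumes "l \<ge> 1" and "n \<ge> 1"
  shows "\<exists>\<Psi>. bij_betw \<Psi> (G l n) (G l n) \<and>
           (\<forall>\<sigma>\<in>G l n. Der (\<Psi> \<sigma>) = Der \<sigma> \<and> maf (\<Psi> \<sigma>) = maj \<sigma> \<and>
              exc (\<Psi> \<sigma>) = exc \<sigma> \<and> fixn (\<Psi> \<sigma>) = fixn \<sigma> \<and> col (\<Psi> \<sigma>) = col \<sigma>)"
proof -
  obtain \<Psi> where bij: "bij_betw \<Psi> (G l n) (G l n)"
    and P: "\<forall>x\<in>G l n. (Der (\<Psi> x), fixn (\<Psi> x)) = (Der x, fixn x) \<and> maf (\<Psi> x) = maj x"
    using glue[where \<kappa>="\<lambda>y. (Der y, fixn y)" and f=maj and g=maf, OF finite_G fiber_eq[OF _ assms(1)]] by blast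
  have "\<forall>\<sigma>\<in>G l n. Der (\<Psi> \<sigma>) = Der \<sigma> \<and> maf (\<Psi> \<sigma>) = maj \<sigma> \<and>
              exc (\<Psi> \<sigma>) = exc \<sigma> \<and> fixn (\<Psi> \<sigma>) = fixn \<sigma> \<and> col (\<Psi> \<sigma>) = col \<sigma>"
  proof
    fix \<sigma> assume s: "\<sigma> \<in> G l n"
    then have s': "\<Psi> \<sigma> \<in> G l n" using bij bij_betw_apply by metis
    have D: "Der (\<Psi> \<sigma>) = Der \<sigma>" "fixn (\<Psi> \<sigma>) = fixn \<sigma>" "maf (\<Psi> \<sigma>) = maj \<sigma>" using P s by auto
    have "exc (\<Psi> \<sigma>) = exc \<sigma>" using exc_Der[OF s] exc_Der[OF s'] D by simp
    moreover have "col (\<Psi> \<sigma>) = col \<sigma>" using col_Der[of \<sigma>] col_Der[of "\<Psi> \<sigma>"] D by simp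
    ultimately show "Der (\<Psi> \<sigma>) = Der \<sigma> \<and> maf (\<Psi> \<sigma>) = maj \<sigma> \<and>
              exc (\<Psi> \<sigma>) = exc \<sigma> \<and> fixn (\<Psi> \<sigma>) = fixn \<sigma> \<and> col (\<Psi> \<sigma>) = col \<sigma>" using D by simp
  qed
  then show ?thesis using bij by blast
qed


end
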